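(* Let $G=\{(x,R(x)) : x\in[0,1]\}$ be the graph of $R$. Then its closure in $\mathbb R^2$ is $$\overline{G}=G\cup\bigcup_{x\in\mathscr D\setminus\{1\}}\big(\{x\}\times I_x\big).$$ Moreover, for every $x\in\mathscr D\setminus\{0,1\}$, $$I_x=\Big[\liminf_{t\searrow x}R(t),\ \limsup_{t\searrow x}R(t)\Big]\quad\text{and}\quad R(x)\notin I_x.$$
   Context: Define $\rho$ on binary words: for $b=b_1b_2\dots$, $\rho(b)$ is obtained by deleting every digit $b_n=0$ and replacing every $b_n=1$ by $0$ if $n$ is odd and by $1$ if $n$ is even. For $x\in(0,1]$ let $\beta(x)$ be the unique binary expansion of $x$ with infinitely many $1$'s. Define $R:[0,1]\to[0,1]$ by $R(0)=2/3$ and, for $x\in(0,1]$, $R(x)=\sum_{n\ge1}c_n2^{-n}$ where $c=\rho(\beta(x))$. $\mathscr D$ is the set of dyadic rationals in $[0,1]$. For $x\in\mathscr D\setminus\{1\}$ with finite binary expression $x=0.x_1x_2\dots x_n$ (terminal zeros irrelevant; empty word for $x=0$), let $u=\rho(x_1\dots x_n)$ (a finite word) and let $I_x$ be the closed interval of all $y\in[0,1]$ having a binary expansion beginning with $u$, i.e. $I_x=[0.u000\dots,\,0.u111\dots]$; in particular $I_0=[0,1]$. *)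

theory Defs
  imports "HOL-Analysis.Analysis" "HOL-Library.Infinite_Set"
begin

text \<open>Binary words: a finite word is a bool list (True = digit 1), w!0 = b_1;
  an infinite word is a function nat => bool, b 0 = b_1.\<close>

text \<open>rho on finite words: keep the 1-digits; the digit at (1-based) position n
  becomes 0 if n is odd and 1 if n is even. With 0-based index i, n = i+1, so
  the output digit is 1 iff i is odd.\<close>
definition rho_list :: "bool list \<Rightarrow> bool list" where
  "rho_list w = map odd (filter (\<lambda>i. w ! i) [0..<length w])"

text \<open>rho on infinite words with infinitely many 1's: the n-th output digit
  comes from the n-th 1 of the input.\<close>
definition rho_inf :: "(nat \<Rightarrow> bool) \<Rightarrow> (nat \<Rightarrow> bool)" where
  "rho_inf b = (\<lambda>n. odd (enumerate {i. b i} n))"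

definition bval :: "(nat \<Rightarrow> bool) \<Rightarrow> real" where
  "bval b = (\<Sum>n. of_bool (b n) / 2 ^ Suc n)"

definition wval :: "bool list \<Rightarrow> real" where
  "wval w = (\<Sum>i<length w. of_bool (w ! i) / 2 ^ Suc i)"

definition beta :: "real \<Rightarrow> (nat \<Rightarrow> bool)" where
  "beta x = (THE b. infinite {n. b n} \<and> (\<lambda>n. of_bool (b n) / 2 ^ Suc n) sums x)"

definition R :: "real \<Rightarrow> real" where
  "R x = (if x = 0 then 2/3 else bval (rho_inf (beta x)))"

definition dyadics :: "real set" where
  "dyadics = {x. \<exists>(k::nat) (n::nat). x = real k / 2 ^ n \<and> 0 \<le> x \<and> x \<le> 1}"

text \<open>I_x: pick a finite binary expression of x (terminal zeros irrelevant),
  u = rho of it, and I_x = [0.u000..., 0.u111...].\<close>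
definition Iint :: "real \<Rightarrow> real set" where
  "Iint x = (let u = rho_list (SOME w. wval w = x)
             in {wval u .. wval u + 1 / 2 ^ length u})"

end

theory Submission
  imports Defs
begin


lemma wval_Nil[simp]: "wval [] = 0" by (simp add: wval_def)

lemma wval_Cons: "wval (b # w) = (of_bool b + wval w) / 2"
proof -
  have "wval (b # w) = (\<Sum>i<Suc (length w). of_bool ((b#w) ! i) / 2 ^ Suc i)"
    by (simp add: wval_def)
  also have "\<dots> = of_bool b / 2 + (\<Sum>i<length w. of_bool (w ! i) / 2 ^ Suc (Suc i))"
    by (subst sum.lessThan_Suc_shift) simp
  also have "(\<Sum>i<length w. of_bool (w ! i) / 2 ^ Suc (Suc i)) = wval w / 2"
    by (simp add: wval_def sum_divide_distrib)
  finally show ?thesis by simp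
qed

lemma wval_append: "wval (v @ w) = wval v + wval w / 2 ^ length v"
  by (induction v) (auto simp: wval_Cons field_simps)

lemma wval_bounds: "0 \<le> wval w \<and> wval w \<le> 1 - 1 / 2 ^ length w"
proof (induction w)
  case Nil then show ?case by simp
next
  case (Cons b w)
  define e where "e = 1 / (2::real) ^ length w"
  have e0: "0 < e" by (simp add: e_def)
  have e2: "1 / 2 ^ length (b # w) = e / (2::real)" by (simp add: e_def)
  have ih: "0 \<le> wval w" "wval w \<le> 1 - e" using Cons by (auto simp: e_def)
  show ?case unfolding e2 wval_Cons using ih e0 by (cases b) auto
qed

lemma wval_lt1: "wval w < 1"
  using wval_bounds[of w] by (smt (verit) divide_pos_pos zero_less_power)

lemma wval_nonneg: "0 \<le> wval w" using wval_bounds by blast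

lemma wval_replicate_False[simp]: "wval (replicate n False) = 0"
  by (induction n) (auto simp: wval_Cons)

lemma wval_nat: "\<exists>k::nat. wval w = real k / 2 ^ length w"
proof (induction w)
  case Nil then show ?case by simp
next
  case (Cons b w)
  then obtain k where k: "wval w = real k / 2 ^ length w" by blast
  show ?case
    by (rule exI[of _ "of_bool b * 2 ^ length w + k"]) (auto simp: wval_Cons k field_simps)
qed

lemma rho_list_Nil[simp]: "rho_list [] = []" by (simp add: rho_list_def)

lemma rho_list_Cons: "rho_list (b # w) = (if b then [False] else []) @ map Not (rho_list w)"
proof -
  have "[0..<length (b#w)] = 0 # map Suc [0..<length w]"
    by (simp add: map_Suc_upt upt_conv_Cons del: upt_Suc)
  then show ?thesis
    by (simp add: rho_list_def filter_map comp_def)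
qed

definition tw :: "bool \<Rightarrow> bool list \<Rightarrow> bool list" where
  "tw p xs = (if p then map Not xs else xs)"

lemma rho_list_append: "rho_list (v @ w) = rho_list v @ tw (odd (length v)) (rho_list w)"
  by (induction v) (auto simp: rho_list_Cons tw_def comp_def)

lemma rho_list_replicate_False[simp]: "rho_list (replicate n False) = []"
  by (induction n) (auto simp: rho_list_Cons)

lemma rho_list_pad[simp]: "rho_list (w @ replicate n False) = rho_list w"
  by (simp add: rho_list_append tw_def)

lemma length_tw[simp]: "length (tw p xs) = length xs" by (simp add: tw_def)

lemma wval_same_length:
  "length v = length w \<Longrightarrow> wval v = wval w \<Longrightarrow> v = w"
proof (induction v arbitrary: w)
  case Nil then show ?case by simp
next
  case (Cons a v)
  then obtain b w' where w: "w = b # w'" by (cases w) auto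
  have eq: "of_bool a + wval v = of_bool b + wval w'"
    using Cons.prems by (simp add: w wval_Cons)
  have "a = b" using eq wval_lt1[of v] wval_lt1[of w'] wval_nonneg[of v] wval_nonneg[of w']
    by (cases a; cases b) auto
  then show ?case using eq Cons by (simp add: w)
qed

lemma wval_rho_unique:
  assumes "wval v = wval w" shows "rho_list v = rho_list w"
proof -
  let ?K = "max (length v) (length w)"
  define v' where "v' = v @ replicate (?K - length v) False"
  define w' where "w' = w @ replicate (?K - length w) False"
  have "v' = w'"
    by (rule wval_same_length) (auto simp: v'_def w'_def wval_append assms)
  then show ?thesis using v'_def w'_def by (metis rho_list_pad)
qed



definition cat :: "bool list \<Rightarrow> (nat \<Rightarrow> bool) \<Rightarrow> nat \<Rightarrow> bool" where
  "cat w c n = (if n < length w then w ! n else c (n - length w))"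

definition twf :: "bool \<Rightarrow> (nat \<Rightarrow> bool) \<Rightarrow> nat \<Rightarrow> bool" where
  "twf p c n = (if p then \<not> c n else c n)"

abbreviation trm :: "(nat \<Rightarrow> bool) \<Rightarrow> nat \<Rightarrow> real" where
  "trm c n \<equiv> of_bool (c n) / 2 ^ Suc n"

lemma trm_le: "trm c n \<le> (1/2) ^ Suc n"
  by (simp add: power_divide)

lemma summable_trm: "summable (trm c)"
  by (rule summable_comparison_test'[where g="\<lambda>n. (1/2::real) ^ Suc n" and N=0])
     (use power_half_series summable_def trm_le in auto)

lemma bval_sums: "trm c sums bval c"
  unfolding bval_def using summable_trm by (simp add: summable_sums)

lemma bval_nonneg: "0 \<le> bval c"
  unfolding bval_def by (rule suminf_nonneg[OF summable_trm]) simp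

lemma bval_le1: "bval c \<le> 1"
proof -
  have "bval c \<le> (\<Sum>n. (1/2::real) ^ Suc n)"
    unfolding bval_def
    by (rule suminf_le[OF trm_le summable_trm]) (use power_half_series summable_def in blast)
  then show ?thesis using power_half_series sums_unique by fastforce
qed

lemma bval_pos: "c i \<Longrightarrow> 0 < bval c"
  unfolding bval_def by (rule suminf_pos2[OF summable_trm, of _ i]) auto

lemma cat_sums:
  assumes "trm c sums v"
  shows "trm (cat w c) sums (wval w + v / 2 ^ length w)"
proof -
  let ?N = "length w"
  have "(\<lambda>i. trm (cat w c) (i + ?N)) = (\<lambda>i. trm c i / 2 ^ ?N)"
    by (auto simp: cat_def power_add)
  then have "(\<lambda>i. trm (cat w c) (i + ?N)) sums (v / 2 ^ ?N)"
    using sums_divide[OF assms] by simp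
  then have "trm (cat w c) sums (v / 2 ^ ?N + (\<Sum>i<?N. trm (cat w c) i))"
    by (rule sums_iff_shift[THEN iffD1])
  moreover have "(\<Sum>i<?N. trm (cat w c) i) = wval w"
    by (simp add: wval_def cat_def)
  ultimately show ?thesis by (simp add: add.commute)
qed

lemma bval_cat: "bval (cat w c) = wval w + bval c / 2 ^ length w"
  using cat_sums[OF bval_sums] bval_sums sums_unique2 by blast

lemma bval_not: "bval (\<lambda>n. \<not> c n) = 1 - bval c"
proof -
  have "(\<lambda>n. (1/2::real) ^ Suc n - trm c n) sums (1 - bval c)"
    by (rule sums_diff[OF power_half_series bval_sums])
  moreover have "(\<lambda>n. (1/2::real) ^ Suc n - trm c n) = trm (\<lambda>n. \<not> c n)"
    by (auto simp: power_divide)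
  ultimately show ?thesis using bval_sums sums_unique2 by metis
qed

lemma bval_twf: "bval (twf p c) = (if p then 1 - bval c else bval c)"
proof -
  have "twf True c = (\<lambda>n. \<not> c n)" "twf False c = c" by (auto simp: fun_eq_iff twf_def)
  then show ?thesis by (cases p) (auto simp: bval_not)
qed

lemma prefix_decomp: "b = cat (map b [0..<n]) (\<lambda>i. b (i + n))"
  by (auto simp: cat_def fun_eq_iff)

lemma infinite_shift: "infinite {i. b i} \<Longrightarrow> \<exists>i. b (i + (n::nat))"
proof -
  assume "infinite {i. b i}"
  then obtain m where "m \<ge> n" "b m" unfolding infinite_nat_iff_unbounded_le by auto
  then show ?thesis by (intro exI[of _ "m - n"]) simp
qed

lemma wval_prefix: "wval (map b [0..<n]) = (\<Sum>i<n. trm b i)"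
  by (simp add: wval_def)

lemma partial_sums_ceiling:
  assumes inf: "infinite {i. b i}" and s: "trm b sums x"
  shows "(\<Sum>i<n. trm b i) = (of_int \<lceil>2 ^ n * x\<rceil> - 1) / 2 ^ n"
proof -
  let ?w = "map b [0..<n]"
  have "trm (cat ?w (\<lambda>i. b (i + n))) sums (wval ?w + bval (\<lambda>i. b (i + n)) / 2 ^ length ?w)"
    by (rule cat_sums[OF bval_sums])
  then have "trm (cat ?w (\<lambda>i. b (i + n))) sums (wval ?w + bval (\<lambda>i. b (i + n)) / 2 ^ n)"
    by simp
  then have x: "x = wval ?w + bval (\<lambda>i. b (i + n)) / 2 ^ n"
    using s prefix_decomp[of b n] sums_unique2 by metis
  obtain i where "b (i + n)" using infinite_shift[OF inf] by blast
  then have pos: "0 < bval (\<lambda>i. b (i + n))" by (rule bval_pos)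
  have le: "bval (\<lambda>i. b (i + n)) \<le> 1" by (rule bval_le1)
  obtain k :: nat where k: "wval ?w = real k / 2 ^ n" using wval_nat[of ?w] by auto
  have "2 ^ n * x = real k + bval (\<lambda>i. b (i + n))"
    using x k by (simp add: field_simps)
  then have "\<lceil>2 ^ n * x\<rceil> = int k + 1"
    using pos le by (intro ceiling_unique) auto
  then show ?thesis using k wval_prefix[of b n] by simp
qed

lemma expansion_unique:
  assumes "infinite {i. b i}" "trm b sums x" "infinite {i. b' i}" "trm b' sums x"
  shows "b = b'"
proof
  fix n
  have "trm b n = (\<Sum>i<Suc n. trm b i) - (\<Sum>i<n. trm b i)" by simp
  also have "\<dots> = (\<Sum>i<Suc n. trm b' i) - (\<Sum>i<n. trm b' i)"
    using partial_sums_ceiling[OF assms(1,2)] partial_sums_ceiling[OF assms(3,4)] by simp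
  also have "\<dots> = trm b' n" by simp
  finally show "b n = b' n" by (cases "b n"; cases "b' n") auto
qed



definition up :: "real \<Rightarrow> nat \<Rightarrow> bool" where
  "up x n = odd (\<lceil>2 ^ Suc n * x\<rceil> - 1)"

lemma ceiling_double:
  fixes y :: real
  shows "\<lceil>2 * y\<rceil> - 1 = 2 * (\<lceil>y\<rceil> - 1) + of_bool (odd (\<lceil>2 * y\<rceil> - 1))"
proof -
  let ?c = "\<lceil>y\<rceil>" and ?d = "\<lceil>2 * y\<rceil>"
  have c: "of_int ?c - 1 < y" "y \<le> of_int ?c" using ceiling_correct[of y] by auto
  have d: "of_int ?d - 1 < 2 * y" "2 * y \<le> of_int ?d" using ceiling_correct[of "2*y"] by auto
  have "?d \<le> 2 * ?c" using c by (simp add: ceiling_le_iff)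
  moreover have "2 * ?c - 2 < ?d"
  proof -
    have "2 * real_of_int ?c - 2 < of_int ?d" using c d by linarith
    then have "real_of_int (2 * ?c - 2) < of_int ?d" by simp
    then show ?thesis by (simp only: of_int_less_iff)
  qed
  ultimately have "?d = 2 * ?c \<or> ?d = 2 * ?c - 1" by linarith
  then show ?thesis by auto
qed

lemma up_partial:
  assumes "0 < x" "x \<le> 1"
  shows "(\<Sum>i<n. trm (up x) i) = (of_int \<lceil>2 ^ n * x\<rceil> - 1) / 2 ^ n"
proof (induction n)
  case 0
  have "\<lceil>x\<rceil> = 1" using assms by (intro ceiling_unique) auto
  then show ?case by simp
next
  case (Suc n)
  define y where "y = 2 ^ n * x"
  define c where "c = \<lceil>y\<rceil>"
  define d where "d = \<lceil>2 * y\<rceil>"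
  have e: "\<lceil>2 ^ Suc n * x\<rceil> = d" by (simp add: d_def y_def mult.assoc)
  have ci: "d - 1 = 2 * (c - 1) + of_bool (odd (d - 1))"
    unfolding c_def d_def by (rule ceiling_double)
  have key: "real_of_int (d - 1) = 2 * (of_int c - 1) + of_bool (odd (d - 1))"
    by (subst ci) simp
  have u: "up x n = odd (d - 1)" unfolding up_def e by (rule refl)
  have "(\<Sum>i<Suc n. trm (up x) i) = (of_int c - 1) / 2 ^ n + of_bool (odd (d - 1)) / 2 ^ Suc n"
    using Suc u by (simp add: c_def y_def)
  also have "\<dots> = (2 * (of_int c - 1) + of_bool (odd (d - 1))) / 2 ^ Suc n"
    by (simp add: field_simps)
  also have "\<dots> = real_of_int (d - 1) / 2 ^ Suc n"
    using key by simp
  finally show ?case using e by simp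
qed

lemma up_partial_bounds:
  assumes "0 < x" "x \<le> 1"
  shows "(\<Sum>i<n. trm (up x) i) < x" "x \<le> (\<Sum>i<n. trm (up x) i) + (1/2) ^ n"
proof -
  have c: "of_int \<lceil>2 ^ n * x\<rceil> - 1 < 2 ^ n * x" "2 ^ n * x \<le> of_int \<lceil>2 ^ n * x\<rceil>"
    using ceiling_correct[of "2 ^ n * x"] by auto
  show "(\<Sum>i<n. trm (up x) i) < x" "x \<le> (\<Sum>i<n. trm (up x) i) + (1/2) ^ n"
    unfolding up_partial[OF assms] using c by (auto simp: field_simps power_divide)
qed

lemma up_sums:
  assumes "0 < x" "x \<le> 1"
  shows "trm (up x) sums x"
  unfolding sums_def
proof (rule tendsto_sandwich[where f="\<lambda>n. x - (1/2)^n" and h="\<lambda>n. x"])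
  show "\<forall>\<^sub>F n in sequentially. x - (1/2)^n \<le> (\<Sum>i<n. trm (up x) i)"
    using up_partial_bounds(2)[OF assms] by (intro always_eventually allI) (auto simp: algebra_simps)
  show "\<forall>\<^sub>F n in sequentially. (\<Sum>i<n. trm (up x) i) \<le> x"
    using up_partial_bounds(1)[OF assms] by (intro always_eventually allI less_imp_le)
  have "(\<lambda>n. x - (1/2::real)^n) \<longlonglongrightarrow> x - 0"
    by (intro tendsto_diff tendsto_const LIMSEQ_realpow_zero) auto
  then show "(\<lambda>n. x - (1/2::real)^n) \<longlonglongrightarrow> x" by simp
qed simp

lemma up_infinite:
  assumes "0 < x" "x \<le> 1"
  shows "infinite {i. up x i}"
proof
  assume "finite {i. up x i}"
  then obtain m where m: "{i. up x i} \<subseteq> {..<m}" using finite_nat_bounded by blast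
  let ?P = "\<lambda>n. (\<Sum>i<n. trm (up x) i)"
  have const: "?P n = ?P m" if "n \<ge> m" for n
    using that
  proof (induction n rule: dec_induct)
    case (step n)
    then have "\<not> up x n" using m by auto
    then show ?case using step by simp
  qed simp
  have pos: "0 < x - ?P m" using up_partial_bounds(1)[OF assms] by simp
  obtain n0 where n0: "(1/2::real) ^ n0 < x - ?P m" using real_arch_pow_inv[OF pos, of "1/2"] by auto
  let ?n = "max n0 m"
  have "(1/2::real) ^ ?n \<le> (1/2) ^ n0" by (rule power_decreasing) auto
  moreover have "x \<le> ?P m + (1/2) ^ ?n" using up_partial_bounds(2)[OF assms, of ?n] const[of ?n] by simp
  ultimately show False using n0 by linarith
qed

lemma beta_eq:
  assumes "0 < x" "x \<le> 1" "infinite {i. b i}" "trm b sums x"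
  shows "beta x = b"
  unfolding beta_def
proof (rule the_equality)
  show "infinite {n. b n} \<and> trm b sums x" using assms by blast
  fix b' assume "infinite {n. b' n} \<and> trm b' sums x"
  then show "b' = b" using expansion_unique[OF _ _ assms(3,4)] by blast
qed

lemma beta_up: "0 < x \<Longrightarrow> x \<le> 1 \<Longrightarrow> beta x = up x"
  using beta_eq up_infinite up_sums by blast

lemma beta_props:
  assumes "0 < x" "x \<le> 1"
  shows "infinite {i. beta x i}" "trm (beta x) sums x"
  using beta_up[OF assms] up_infinite[OF assms] up_sums[OF assms] by auto

lemma strict_mono_range_eq:
  fixes g h :: "nat \<Rightarrow> nat"
  assumes g: "strict_mono g" and h: "strict_mono h" and r: "range g = range h"
  shows "g = h"
proof
  fix n show "g n = h n"
  proof (induction n rule: less_induct)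
    case (less n)
    have "g n \<in> range h" "h n \<in> range g" using r by blast+
    then obtain k j where k: "g n = h k" and j: "h n = g j" by blast
    show ?case
    proof (cases k n rule: linorder_cases)
      case less_k: less
      then have "g n = g k" using k less.IH by simp
      then show ?thesis using less_k strict_mono_eq[OF g] by simp
    next
      case equal then show ?thesis using k by simp
    next
      case greater
      then have "h n < h k" using strict_mono_less[OF h] by blast
      then have "g j < g n" using j k by simp
      then have "j < n" using strict_mono_less[OF g] by blast
      then have "h n = h j" using j less.IH by simp
      then show ?thesis using \<open>j < n\<close> strict_mono_eq[OF h] by simp
    qed
  qed
qed

lemma enumerate_range:
  fixes g :: "nat \<Rightarrow> nat"
  assumes g: "strict_mono g"
  shows "enumerate (range g) = g"
proof -
  have inf: "infinite (range g)" using g range_inj_infinite strict_mono_imp_inj_on by blast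
  have "strict_mono (enumerate (range g))"
    using enumerate_mono[OF _ inf] by (auto simp: strict_mono_def)
  moreover have "range (enumerate (range g)) = range g"
  proof
    show "range (enumerate (range g)) \<subseteq> range g" using enumerate_in_set[OF inf] by blast
    show "range g \<subseteq> range (enumerate (range g))"
    proof
      fix s assume "s \<in> range g"
      then obtain n where "enumerate (range g) n = s" using enumerate_Ex[OF inf] by blast
      then show "s \<in> range (enumerate (range g))" by blast
    qed
  qed
  ultimately show ?thesis by (rule strict_mono_range_eq[OF _ g])
qed

lemma rho_inf_strict:
  fixes g :: "nat \<Rightarrow> nat"
  assumes "strict_mono g" "range g = {i. b i}"
  shows "rho_inf b = (\<lambda>n. odd (g n))"
  unfolding rho_inf_def assms(2)[symmetric] enumerate_range[OF assms(1)] ..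



lemma rho_inf_cat:
  assumes inf: "infinite {i. b i}"
  shows "rho_inf (cat w b) = cat (rho_list w) (twf (odd (length w)) (rho_inf b))"
proof -
  define N where "N = length w"
  define xs where "xs = filter (\<lambda>i. w ! i) [0..<N]"
  define L where "L = length xs"
  define e where "e = enumerate {i. b i}"
  have rl: "rho_list w = map odd xs" by (simp add: rho_list_def xs_def N_def)
  have lenrl: "length (rho_list w) = L" by (simp add: rl L_def)
  define g where "g n = (if n < L then xs ! n else N + e (n - L))" for n
  have sorted: "sorted_wrt (<) xs" unfolding xs_def by (rule sorted_wrt_filter) simp
  have xsN: "i < N" "w ! i" if "i \<in> set xs" for i using that by (auto simp: xs_def)
  have estep: "e m < e (Suc m)" for m unfolding e_def by (rule enumerate_step[OF inf])
  have sm: "strict_mono g"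
    unfolding strict_mono_Suc_iff
  proof
    fix n
    consider "Suc n < L" | "n < L" "Suc n = L" | "L \<le> n" by linarith
    then show "g n < g (Suc n)"
    proof cases
      case 1 then show ?thesis using sorted_wrt_nth_less[OF sorted, of n "Suc n"] by (simp add: g_def L_def)
    next
      case 2
      then have "xs ! n \<in> set xs" by (simp add: L_def)
      then have "xs ! n < N" using xsN by blast
      then show ?thesis using 2 by (simp add: g_def)
    next
      case 3
      then have "Suc n - L = Suc (n - L)" by simp
      then show ?thesis using 3 estep by (simp add: g_def)
    qed
  qed
  have rg: "range g = {i. cat w b i}"
  proof
    show "range g \<subseteq> {i. cat w b i}"
    proof clarify
      fix n
      show "cat w b (g n)"
      proof (cases "n < L")
        case True
        then have "xs ! n \<in> set xs" by (simp add: L_def)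
        then show ?thesis using True xsN by (simp add: g_def cat_def N_def)
      next
        case False
        have "e (n - L) \<in> {i. b i}" unfolding e_def by (rule enumerate_in_set[OF inf])
        then show ?thesis using False by (simp add: g_def cat_def N_def)
      qed
    qed
    show "{i. cat w b i} \<subseteq> range g"
    proof clarify
      fix i assume ci: "cat w b i"
      show "i \<in> range g"
      proof (cases "i < N")
        case True
        then have "i \<in> set xs" using ci by (simp add: xs_def cat_def N_def)
        then obtain k where k: "k < L" "xs ! k = i" by (auto simp: in_set_conv_nth L_def)
        then show ?thesis by (metis g_def rangeI)
      next
        case False
        then have "b (i - N)" using ci by (simp add: cat_def N_def)
        then obtain m where "e m = i - N" using enumerate_Ex[OF inf] e_def by blast
        then have "g (L + m) = i" using False by (simp add: g_def)
        then show ?thesis by (metis rangeI)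
      qed
    qed
  qed
  have ri: "rho_inf (cat w b) = (\<lambda>n. odd (g n))" by (rule rho_inf_strict[OF sm rg])
  show ?thesis
  proof
    fix n
    show "rho_inf (cat w b) n = cat (rho_list w) (twf (odd (length w)) (rho_inf b)) n"
      unfolding ri
      by (cases "n < L") (auto simp: g_def cat_def lenrl rl L_def twf_def rho_inf_def e_def N_def)
  qed
qed

lemma R_pos: "0 < x \<Longrightarrow> R x = bval (rho_inf (beta x))" by (simp add: R_def)

lemma R_bounds: "0 \<le> R x \<and> R x \<le> 1"
  by (simp add: R_def bval_nonneg bval_le1)

lemma R_cat:
  assumes s: "0 < s" "s \<le> 1" and t: "t = wval w + s / 2 ^ length w"
  shows "0 < t" "t \<le> 1"
    "R t = wval (rho_list w) + (if odd (length w) then 1 - R s else R s) / 2 ^ length (rho_list w)"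
proof -
  let ?N = "length w"
  define b where "b = beta s"
  have inf: "infinite {i. b i}" and bs: "trm b sums s" using beta_props[OF s] by (auto simp: b_def)
  define b' where "b' = cat w b"
  have "(\<lambda>i. i + ?N) ` {i. b i} \<subseteq> {i. b' i}" by (auto simp: b'_def cat_def)
  moreover have "infinite ((\<lambda>i. i + ?N) ` {i. b i})"
    using inf finite_imageD inj_on_def by (metis (no_types, lifting) add_right_cancel)
  ultimately have inf': "infinite {i. b' i}" using finite_subset by blast
  have bs': "trm b' sums t" unfolding b'_def t by (rule cat_sums[OF bs])
  have tb: "t = bval b'" using bs' bval_sums sums_unique2 by blast
  show t0: "0 < t" unfolding t using s wval_nonneg[of w] by (simp add: add_nonneg_pos)
  show t1: "t \<le> 1" using tb bval_le1 by simp
  have bt: "beta t = b'" by (rule beta_eq[OF t0 t1 inf' bs'])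
  have "R t = bval (rho_inf b')" using R_pos[OF t0] bt by simp
  also have "\<dots> = bval (cat (rho_list w) (twf (odd ?N) (rho_inf b)))"
    unfolding b'_def rho_inf_cat[OF inf] ..
  also have "\<dots> = wval (rho_list w) + (if odd ?N then 1 - R s else R s) / 2 ^ length (rho_list w)"
    by (simp add: bval_cat bval_twf R_pos[OF s(1)] b_def)
  finally show "R t = wval (rho_list w) + (if odd (length w) then 1 - R s else R s) / 2 ^ length (rho_list w)" .
qed



lemma word_exists: "k < 2 ^ n \<Longrightarrow> \<exists>w. length w = n \<and> wval w = real k / 2 ^ n"
proof (induction n arbitrary: k)
  case 0 then show ?case by (intro exI[of _ "[]"]) simp
next
  case (Suc n)
  define b where "b = (2 ^ n \<le> k)"
  define k' where "k' = k - of_bool b * 2 ^ n"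
  have "k' < 2 ^ n" using Suc.prems by (auto simp: k'_def b_def)
  then obtain w where w: "length w = n" "wval w = real k' / 2 ^ n" using Suc.IH by blast
  have kk: "real k = of_bool b * 2 ^ n + real k'" by (auto simp: k'_def b_def of_nat_diff)
  show ?case
    by (intro exI[of _ "b # w"]) (auto simp: wval_Cons w kk field_simps)
qed

lemma dyadic_word: "x \<in> dyadics \<Longrightarrow> x < 1 \<Longrightarrow> \<exists>w. wval w = x"
proof -
  assume "x \<in> dyadics" "x < 1"
  then obtain k n where x: "x = real k / 2 ^ n" and "x < 1" by (auto simp: dyadics_def)
  then have "real k < 2 ^ n" by (simp add: divide_less_eq)
  then have "k < 2 ^ n" by (metis of_nat_less_iff of_nat_numeral of_nat_power)
  then show ?thesis using word_exists x by blast
qed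

lemma Iint_eq:
  assumes "wval w = x"
  shows "Iint x = {wval (rho_list w) .. wval (rho_list w) + 1 / 2 ^ length (rho_list w)}"
proof -
  have "wval (SOME w. wval w = x) = x" using assms by (metis (mono_tags) someI)
  then have "rho_list (SOME w. wval w = x) = rho_list w" using assms wval_rho_unique by metis
  then show ?thesis by (simp add: Iint_def Let_def)
qed

lemma right_in_Iint:
  assumes w: "wval w = x" and t: "x < t" "t \<le> x + 1 / 2 ^ length w"
  shows "R t \<in> Iint x"
proof -
  let ?N = "length w"
  define s where "s = (t - x) * 2 ^ ?N"
  have s0: "0 < s" using t by (simp add: s_def)
  have s1: "s \<le> 1" using t by (simp add: s_def field_simps)
  have ts: "t = wval w + s / 2 ^ ?N" using w by (simp add: s_def)
  have Rt: "R t = wval (rho_list w) + (if odd ?N then 1 - R s else R s) / 2 ^ length (rho_list w)"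
    by (rule R_cat(3)[OF s0 s1 ts])
  have "0 \<le> (if odd ?N then 1 - R s else R s)" "(if odd ?N then 1 - R s else R s) \<le> 1"
    using R_bounds[of s] by auto
  then show ?thesis unfolding Iint_eq[OF w] Rt by (auto simp: divide_right_mono)
qed

lemma bval_false: "bval (\<lambda>_. False) = 0" by (simp add: bval_def)

lemma R_surj:
  assumes "0 \<le> z" "z \<le> 1"
  shows "\<exists>s. 0 < s \<and> s \<le> 1 \<and> R s = z"
proof -
  obtain c where c: "bval c = z"
  proof (cases "z = 0")
    case True then show ?thesis using that bval_false by blast
  next
    case False
    then have "0 < z" using assms by simp
    then have "bval (beta z) = z" using beta_props[of z] assms bval_sums sums_unique2 by blast
    then show ?thesis using that by blast
  qed
  define g where "g k = 2 * k + of_bool (c k)" for k :: nat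
  have sm: "strict_mono g" unfolding strict_mono_Suc_iff g_def by auto
  define b where "b i = (i \<in> range g)" for i
  have rg: "range g = {i. b i}" by (auto simp: b_def)
  have inf: "infinite {i. b i}" using rg sm range_inj_infinite strict_mono_imp_inj_on by metis
  define s where "s = bval b"
  have s0: "0 < s" unfolding s_def by (rule bval_pos[of b "g 0"]) (simp add: b_def)
  have s1: "s \<le> 1" by (simp add: s_def bval_le1)
  have bt: "beta s = b" unfolding s_def by (rule beta_eq[OF s0[unfolded s_def] s1[unfolded s_def] inf bval_sums])
  have "rho_inf b = (\<lambda>n. odd (g n))" by (rule rho_inf_strict[OF sm rg])
  also have "\<dots> = c" by (auto simp: g_def fun_eq_iff)
  finally have "R s = z" using R_pos[OF s0] bt c by simp
  then show ?thesis using s0 s1 by blast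
qed

lemma R_one: "R 1 = 1 / 3"
proof -
  have inf: "infinite {i::nat. True}" by simp
  have "trm (\<lambda>_. True) = (\<lambda>n. (1/2::real) ^ Suc n)" by (simp add: fun_eq_iff power_divide)
  then have sm: "trm (\<lambda>_. True) sums 1" using power_half_series by simp
  have bt: "beta 1 = (\<lambda>_. True)" by (rule beta_eq[OF _ _ inf sm]) auto
  have "rho_inf (\<lambda>_. True) = (\<lambda>n. odd (id n))"
    by (rule rho_inf_strict) (auto simp: strict_mono_def)
  then have r: "R 1 = bval (\<lambda>n. odd n)" using R_pos[of 1] bt by simp
  have ce: "(\<lambda>n::nat. odd n) = cat [False] (\<lambda>n. \<not> odd n)"
    by (auto simp: fun_eq_iff cat_def)
  have "bval (\<lambda>n. odd n) = (1 - bval (\<lambda>n. odd n)) / 2"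
    by (subst ce) (simp add: bval_cat bval_not wval_Cons)
  then show ?thesis using r by simp
qed

lemma all_false_wval: "True \<notin> set w \<Longrightarrow> wval w = 0"
  by (induction w) (auto simp: wval_Cons)

lemma last_true_decomp: "True \<in> set w \<Longrightarrow> \<exists>w1 M. w = w1 @ [True] @ replicate M False"
proof (induction w rule: rev_induct)
  case Nil then show ?case by simp
next
  case (snoc a v)
  show ?case
  proof (cases a)
    case True then show ?thesis by (intro exI[of _ v] exI[of _ 0]) simp
  next
    case False
    then have "True \<in> set v" using snoc.prems by simp
    then obtain w1 M where "v = w1 @ [True] @ replicate M False" using snoc.IH by blast
    then show ?thesis using False by (intro exI[of _ w1] exI[of _ "Suc M"]) (simp add: replicate_append_same)
  qed
qed



lemma dyadics_le1: "x \<in> dyadics \<Longrightarrow> 0 \<le> x \<and> x \<le> 1" by (auto simp: dyadics_def)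

lemma R_notin:
  assumes x: "x \<in> dyadics - {0, 1}"
  shows "R x \<notin> Iint x"
proof -
  have xl: "x < 1" "0 < x" using x dyadics_le1[of x] by auto
  obtain w where w: "wval w = x" using dyadic_word x xl by auto
  have "True \<in> set w"
  proof (rule ccontr)
    assume "True \<notin> set w"
    then have "wval w = 0" by (rule all_false_wval)
    then show False using w xl by simp
  qed
  then obtain w1 M where wd: "w = w1 @ [True] @ replicate M False" using last_true_decomp by blast
  let ?N = "length w1"
  define u1 where "u1 = rho_list w1"
  define A where "A = wval u1"
  define P :: real where "P = 2 ^ length u1"
  have P0: "0 < P" by (simp add: P_def)
  have "wval w = wval ((w1 @ [True]) @ replicate M False)" using wd by simp
  also have "\<dots> = wval (w1 @ [True])"
    by (simp only: wval_append[of "w1 @ [True]"] wval_replicate_False add_0_right div_0)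
  finally have w2: "wval (w1 @ [True]) = x" using w by simp
  have rl2: "rho_list (w1 @ [True]) = u1 @ [odd ?N]"
    by (simp add: rho_list_append rho_list_Cons tw_def u1_def)
  have I: "Iint x = {A + of_bool (odd ?N) / (2 * P) .. A + of_bool (odd ?N) / (2 * P) + 1 / (2 * P)}"
    unfolding Iint_eq[OF w2] rl2 by (simp add: wval_append wval_Cons A_def P_def)
  have xe: "x = wval (w1 @ [False]) + 1 / 2 ^ length (w1 @ [False])"
    using w2 by (simp add: wval_append wval_Cons)
  have "R x = wval (rho_list (w1 @ [False])) + (if odd (length (w1 @ [False])) then 1 - R 1 else R 1) / 2 ^ length (rho_list (w1 @ [False]))"
    by (rule R_cat(3)[OF _ _ xe]) auto
  also have "rho_list (w1 @ [False]) = u1" by (simp add: rho_list_append rho_list_Cons tw_def u1_def)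
  finally have Rx: "R x = A + (if odd ?N then 1/3 else 2/3) / P"
    by (simp add: R_one A_def P_def)
  show ?thesis
  proof (cases "odd ?N")
    case True
    have "A + 1/3 / P < A + 1 / (2 * P)" using P0 by (simp add: field_simps)
    then show ?thesis unfolding I Rx using True by auto
  next
    case False
    have "A + 1 / (2 * P) < A + 2/3 / P" using P0 by (simp add: field_simps)
    then show ?thesis unfolding I Rx using False by auto
  qed
qed


lemma hit:
  assumes w: "wval w = x" and y: "y \<in> Iint x"
  shows "\<exists>t. x < t \<and> t \<le> x + 1 / 2 ^ (length w + M) \<and> t \<le> 1 \<and> R t = y"
proof -
  define w' where "w' = w @ replicate M False"
  have w'x: "wval w' = x" by (simp add: w'_def wval_append w)
  have rl: "rho_list w' = rho_list w" by (simp add: w'_def)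
  have lw: "length w' = length w + M" by (simp add: w'_def)
  define u where "u = rho_list w"
  define P :: real where "P = 2 ^ length u"
  have P0: "0 < P" by (simp add: P_def)
  have yI: "wval u \<le> y" "y \<le> wval u + 1 / P" using y unfolding Iint_eq[OF w] by (auto simp: u_def P_def)
  define z where "z = (y - wval u) * P"
  have z: "0 \<le> z" "z \<le> 1" using yI P0 by (auto simp: z_def field_simps)
  define z' where "z' = (if odd (length w') then 1 - z else z)"
  have "0 \<le> z'" "z' \<le> 1" using z by (auto simp: z'_def)
  then obtain s where s: "0 < s" "s \<le> 1" "R s = z'" using R_surj by blast
  define t where "t = wval w' + s / 2 ^ length w'"
  have t0: "0 < t" "t \<le> 1" using R_cat(1,2)[OF s(1,2) t_def] by auto
  have "R t = wval u + (if odd (length w') then 1 - R s else R s) / P"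
    using R_cat(3)[OF s(1,2) t_def] rl by (simp add: u_def P_def)
  also have "(if odd (length w') then 1 - R s else R s) = z" using s(3) by (auto simp: z'_def)
  finally have Rt: "R t = y" using P0 by (simp add: z_def)
  have "x < t" using s by (simp add: t_def w'x)
  moreover have "t \<le> x + 1 / 2 ^ (length w + M)"
  proof -
    have "s / 2 ^ length w' \<le> 1 / 2 ^ length w'" by (rule divide_right_mono) (use s in auto)
    then show ?thesis unfolding t_def w'x lw by simp
  qed
  ultimately show ?thesis using t0 Rt by blast
qed

lemma small_pow: "0 < d \<Longrightarrow> \<exists>M. 1 / 2 ^ (N + M) < (d::real)"
proof -
  assume "0 < d"
  then obtain M where M: "(1/2::real) ^ M < d" using real_arch_pow_inv[of d "1/2"] by auto
  have "1 / 2 ^ (N + M) \<le> (1/2::real) ^ M"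
    by (simp add: power_add power_divide field_simps)
  then show ?thesis using M by (intro exI[of _ M]) simp
qed

lemma frequently_hit:
  assumes w: "wval w = x" and y: "y \<in> Iint x" and d: "x < d"
  shows "\<exists>t. x < t \<and> t < d \<and> R t = y"
proof -
  obtain M where M: "1 / 2 ^ (length w + M) < d - x" using small_pow d by fastforce
  obtain t where "x < t" "t \<le> x + 1 / 2 ^ (length w + M)" "R t = y" using hit[OF w y] by blast
  then show ?thesis using M by (intro exI[of _ t]) auto
qed

lemma liminf_limsup:
  assumes x: "x \<in> dyadics - {0, 1}"
  shows "\<exists>a b. Liminf (at_right x) (\<lambda>t. ereal (R t)) = ereal a
                 \<and> Limsup (at_right x) (\<lambda>t. ereal (R t)) = ereal b
                 \<and> Iint x = {a..b}"
proof -
  have xl: "x < 1" "0 < x" using x dyadics_le1[of x] by auto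
  obtain w where w: "wval w = x" using dyadic_word x xl by auto
  define a where "a = wval (rho_list w)"
  define b where "b = wval (rho_list w) + 1 / 2 ^ length (rho_list w)"
  have I: "Iint x = {a..b}" unfolding Iint_eq[OF w] a_def b_def ..
  have ab: "a \<le> b" by (simp add: a_def b_def)
  have ev: "eventually (\<lambda>t. R t \<in> {a..b}) (at_right x)"
    unfolding eventually_at_right_field
  proof (intro exI[of _ "x + 1 / 2 ^ length w"] conjI allI impI)
    show "x < x + 1 / 2 ^ length w" by simp
    fix t assume "x < t" "t < x + 1 / 2 ^ length w"
    then have "R t \<in> Iint x" by (intro right_in_Iint[OF w]) auto
    then show "R t \<in> {a..b}" using I by simp
  qed
  have fr: "\<not> eventually (\<lambda>t. R t \<noteq> y) (at_right x)" if "y \<in> {a..b}" for y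
  proof
    assume "eventually (\<lambda>t. R t \<noteq> y) (at_right x)"
    then obtain d where d: "x < d" "\<And>t. x < t \<Longrightarrow> t < d \<Longrightarrow> R t \<noteq> y"
      unfolding eventually_at_right_field by blast
    have "y \<in> Iint x" using that I by simp
    then obtain t where "x < t" "t < d" "R t = y" using frequently_hit[OF w _ d(1)] by blast
    then show False using d by blast
  qed
  have li: "Liminf (at_right x) (\<lambda>t. ereal (R t)) = ereal a"
  proof (rule order.antisym)
    show "ereal a \<le> Liminf (at_right x) (\<lambda>t. ereal (R t))"
      by (rule Liminf_bounded, rule eventually_mono[OF ev]) simp
    show "Liminf (at_right x) (\<lambda>t. ereal (R t)) \<le> ereal a"
    proof (rule ccontr)
      assume "\<not> ?thesis"
      then have "ereal a < Liminf (at_right x) (\<lambda>t. ereal (R t))" by simp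
      moreover have "\<forall>y<Liminf (at_right x) (\<lambda>t. ereal (R t)). eventually (\<lambda>t. y < ereal (R t)) (at_right x)"
        using le_Liminf_iff[of "Liminf (at_right x) (\<lambda>t. ereal (R t))" "at_right x" "\<lambda>t. ereal (R t)"] by simp
      ultimately have "eventually (\<lambda>t. ereal a < ereal (R t)) (at_right x)" by blast
      then have "eventually (\<lambda>t. R t \<noteq> a) (at_right x)" by (rule eventually_mono) simp
      then show False using fr[of a] ab by simp
    qed
  qed
  have ls: "Limsup (at_right x) (\<lambda>t. ereal (R t)) = ereal b"
  proof (rule order.antisym)
    show "Limsup (at_right x) (\<lambda>t. ereal (R t)) \<le> ereal b"
      by (rule Limsup_bounded, rule eventually_mono[OF ev]) simp
    show "ereal b \<le> Limsup (at_right x) (\<lambda>t. ereal (R t))"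
    proof (rule ccontr)
      assume "\<not> ?thesis"
      then have "Limsup (at_right x) (\<lambda>t. ereal (R t)) < ereal b" by simp
      moreover have "\<forall>y>Limsup (at_right x) (\<lambda>t. ereal (R t)). eventually (\<lambda>t. y > ereal (R t)) (at_right x)"
        using Limsup_le_iff[where C="Limsup (at_right x) (\<lambda>t. ereal (R t))" and F="at_right x" and X="\<lambda>t. ereal (R t)"] by simp
      ultimately have "eventually (\<lambda>t. ereal b > ereal (R t)) (at_right x)" by blast
      then have "eventually (\<lambda>t. R t \<noteq> b) (at_right x)" by (rule eventually_mono) simp
      then show False using fr[of b] ab by simp
    qed
  qed
  show ?thesis using li ls I by blast
qed



definition V :: "bool list \<Rightarrow> real set" where
  "V w = {wval (rho_list w) .. wval (rho_list w) + 1 / 2 ^ length (rho_list w)}"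

lemma in_V:
  assumes t: "wval w < t" "t \<le> wval w + 1 / 2 ^ length w"
  shows "R t \<in> V w"
proof -
  have "R t \<in> Iint (wval w)" by (rule right_in_Iint[OF refl t])
  then show ?thesis using Iint_eq[OF refl, of w] by (simp add: V_def)
qed

lemma closure_pt:
  assumes xy: "(x, y) \<in> closure {(x, R x) | x. x \<in> {0..1}}" and d: "0 < d" and C: "closed C"
    and H: "\<And>t. t \<in> {0..1} \<Longrightarrow> \<bar>t - x\<bar> < d \<Longrightarrow> R t \<in> C"
  shows "y \<in> C"
proof (rule ccontr)
  assume "y \<notin> C"
  then obtain e where e: "0 < e" "\<And>z. dist z y < e \<Longrightarrow> z \<notin> C"
    using C unfolding closed_def open_dist by (metis ComplD ComplI dist_commute)
  have "0 < min d e" using d e by simp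
  then obtain q where q: "q \<in> {(x, R x) | x. x \<in> {0..1}}" "dist q (x, y) < min d e"
    using xy unfolding closure_approachable by blast
  then obtain t where t: "q = (t, R t)" "t \<in> {0..1}" by blast
  have "dist t x < d" using dist_fst_le[of q "(x,y)"] q t by simp
  then have "R t \<in> C" using H[OF t(2)] by (simp add: dist_real_def)
  moreover have "dist (R t) y < e" using dist_snd_le[of q "(x,y)"] q t by simp
  ultimately show False using e by blast
qed

lemma decomp:
  assumes "0 < x" "x \<le> 1"
  shows "\<exists>s. 0 < s \<and> s \<le> 1 \<and> x = wval (map (beta x) [0..<K]) + s / 2 ^ K"
proof -
  let ?b = "beta x"
  have inf: "infinite {i. ?b i}" and bs: "trm ?b sums x" using beta_props[OF assms] by auto
  let ?w = "map ?b [0..<K]"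
  have "trm (cat ?w (\<lambda>i. ?b (i + K))) sums (wval ?w + bval (\<lambda>i. ?b (i + K)) / 2 ^ length ?w)"
    by (rule cat_sums[OF bval_sums])
  then have "trm ?b sums (wval ?w + bval (\<lambda>i. ?b (i + K)) / 2 ^ K)"
    using prefix_decomp[of ?b K] by simp
  then have x: "x = wval ?w + bval (\<lambda>i. ?b (i + K)) / 2 ^ K" using bs sums_unique2 by blast
  obtain i where "?b (i + K)" using infinite_shift[OF inf] by blast
  then have "0 < bval (\<lambda>i. ?b (i + K))" by (rule bval_pos)
  then show ?thesis using x bval_le1 by blast
qed

lemma rho_len_unbounded:
  assumes inf: "infinite {i. b i}"
  shows "\<exists>K. m \<le> length (rho_list (map b [0..<K]))"
proof -
  obtain A where A: "finite A" "card A = m" "A \<subseteq> {i. b i}"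
    using infinite_arbitrarily_large[OF inf] by blast
  obtain K where K: "A \<subseteq> {..<K}" using finite_nat_bounded[OF A(1)] by blast
  let ?xs = "filter (\<lambda>i. map b [0..<K] ! i) [0..<K]"
  have "A \<subseteq> set ?xs"
  proof
    fix i assume "i \<in> A"
    then have "i < K" "b i" using A K by auto
    then show "i \<in> set ?xs" by simp
  qed
  then have "card A \<le> card (set ?xs)" by (rule card_mono[rotated]) simp
  also have "\<dots> \<le> length ?xs" by (rule card_length)
  finally show ?thesis using A by (intro exI[of _ K]) (simp add: rho_list_def)
qed

lemma V_width: "a \<in> V w \<Longrightarrow> c \<in> V w \<Longrightarrow> \<bar>a - c\<bar> \<le> 1 / 2 ^ length (rho_list w)"
  by (auto simp: V_def abs_le_iff)

lemma closure_sub: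
  assumes xy: "(x, y) \<in> closure {(x, R x) | x. x \<in> {0..1}}"
  shows "(x, y) \<in> {(x, R x) | x. x \<in> {0..1}} \<union> (\<Union>x\<in>dyadics - {1}. {x} \<times> Iint x)"
proof -
  let ?G = "{(x, R x) | x. x \<in> {0..1}}"
  have "?G \<subseteq> {0..1} \<times> {0..1}" using R_bounds by auto
  then have "closure ?G \<subseteq> {0..1} \<times> {0..1}"
    by (rule closure_minimal) (simp add: closed_Times)
  then have x01: "0 \<le> x" "x \<le> 1" and y01: "0 \<le> y" "y \<le> 1" using xy by auto
  show ?thesis
  proof (cases "x = 0")
    case True
    have "0 \<in> dyadics" by (auto simp: dyadics_def intro!: exI[of _ 0])
    moreover have "Iint 0 = {0..1}" using Iint_eq[of "[]" 0] by simp
    ultimately show ?thesis using True y01 by auto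
  next
    case False
    then have x0: "0 < x" using x01 by simp
    show ?thesis
    proof (cases "x \<in> dyadics - {1} \<and> y \<in> Iint x")
      case True then show ?thesis by auto
    next
      case notI: False
      define E where "E = (if x \<in> dyadics \<and> x < 1 then Iint x else {})"
      have yE: "y \<notin> E" using notI by (auto simp: E_def)
      have closedE: "closed E" by (auto simp: E_def Iint_def Let_def)
      have yV: "y \<in> V (map (beta x) [0..<K])" for K
      proof -
        let ?w = "map (beta x) [0..<K]"
        obtain s where s: "0 < s" "s \<le> 1" "x = wval ?w + s / 2 ^ K" using decomp[OF x0 x01(2)] by blast
        define lo where "lo = wval ?w"
        define hi where "hi = lo + 1 / 2 ^ K"
        have s1: "0 < s / 2 ^ K" using s by simp
        have s2: "s / 2 ^ K \<le> 1 / 2 ^ K" by (rule divide_right_mono) (use s in auto)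
        have lox: "lo < x" "x \<le> hi" using s(3) s1 s2 unfolding lo_def hi_def by linarith+
        have inV: "R t \<in> V ?w" if "lo < t" "t \<le> hi" for t
          using in_V[of ?w t] that by (simp add: lo_def hi_def)
        have "\<exists>d>0. \<forall>t\<in>{0..1}. \<bar>t - x\<bar> < d \<longrightarrow> R t \<in> V ?w \<union> E"
        proof (cases "x < hi")
          case True
          show ?thesis
            by (rule exI[of _ "min (x - lo) (hi - x)"]) (use True lox inV in auto)
        next
          case False
          then have xhi: "x = hi" using lox by simp
          show ?thesis
          proof (cases "x < 1")
            case x1: True
            obtain k :: nat where k: "lo = real k / 2 ^ K" using wval_nat[of ?w] by (auto simp: lo_def)
            have "x = real (k + 1) / 2 ^ K" using xhi k by (simp add: hi_def add_divide_distrib)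
            then have xd: "x \<in> dyadics" using x01 unfolding dyadics_def by blast
            then obtain w' where w': "wval w' = x" using dyadic_word x1 by blast
            have EI: "E = Iint x" using xd x1 by (simp add: E_def)
            show ?thesis
            proof (rule exI[of _ "min (x - lo) (1 / 2 ^ length w')"], intro conjI ballI impI)
              show "0 < min (x - lo) (1 / 2 ^ length w')" using lox by simp
              fix t assume t: "t \<in> {0..1}" "\<bar>t - x\<bar> < min (x - lo) (1 / 2 ^ length w')"
              show "R t \<in> V ?w \<union> E"
              proof (cases "t \<le> x")
                case True then show ?thesis using t inV xhi by auto
              next
                case False
                then have "R t \<in> Iint x" using t by (intro right_in_Iint[OF w']) auto
                then show ?thesis using EI by simp
              qed
            qed
          next
            case False
            then have "x = 1" using x01 by simp
            show ?thesis
              by (rule exI[of _ "x - lo"]) (use lox inV xhi \<open>x = 1\<close> in auto)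
          qed
        qed
        then obtain d where d: "0 < d" "\<And>t. t \<in> {0..1} \<Longrightarrow> \<bar>t - x\<bar> < d \<Longrightarrow> R t \<in> V ?w \<union> E"
          by blast
        have "closed (V ?w \<union> E)" using closedE by (auto simp: V_def)
        then have "y \<in> V ?w \<union> E" using closure_pt[OF xy d(1)] d(2) by blast
        then show ?thesis using yE by blast
      qed
      have RxV: "R x \<in> V (map (beta x) [0..<K])" for K
      proof -
        obtain s where s: "0 < s" "s \<le> 1" "x = wval (map (beta x) [0..<K]) + s / 2 ^ K"
          using decomp[OF x0 x01(2)] by blast
        have s1: "0 < s / 2 ^ K" using s by simp
        have s2: "s / 2 ^ K \<le> 1 / 2 ^ K" by (rule divide_right_mono) (use s in auto)
        show ?thesis by (rule in_V) (use s(3) s1 s2 in auto)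
      qed
      have "y = R x"
      proof (rule ccontr)
        assume "y \<noteq> R x"
        then have pos: "0 < \<bar>y - R x\<bar>" by simp
        obtain m where m: "(1/2::real) ^ m < \<bar>y - R x\<bar>" using real_arch_pow_inv[OF pos, of "1/2"] by auto
        obtain K where K: "m \<le> length (rho_list (map (beta x) [0..<K]))"
          using rho_len_unbounded beta_props(1)[OF x0 x01(2)] by blast
        have "\<bar>y - R x\<bar> \<le> 1 / 2 ^ length (rho_list (map (beta x) [0..<K]))"
          by (rule V_width[OF yV RxV])
        also have "\<dots> = (1/2::real) ^ length (rho_list (map (beta x) [0..<K]))" by (simp add: power_divide)
        also have "\<dots> \<le> (1/2) ^ m" by (rule power_decreasing[OF K]) auto
        finally show False using m by simp
      qed
      then show ?thesis using x01 by auto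
    qed
  qed
qed



lemma closure_sup:
  assumes x: "x \<in> dyadics - {1}" and y: "y \<in> Iint x"
  shows "(x, y) \<in> closure {(x, R x) | x. x \<in> {0..1}}"
  unfolding closure_approachable
proof (intro allI impI)
  fix e :: real assume e: "0 < e"
  have x01: "0 \<le> x" "x < 1" using x dyadics_le1[of x] by auto
  obtain w where w: "wval w = x" using dyadic_word x x01 by auto
  obtain M where M: "1 / 2 ^ (length w + M) < e" using small_pow e by blast
  obtain t where t: "x < t" "t \<le> x + 1 / 2 ^ (length w + M)" "t \<le> 1" "R t = y"
    using hit[OF w y] by blast
  have "t \<in> {0..1}" using t x01 by simp
  then have "(t, R t) \<in> {(x, R x) | x. x \<in> {0..1}}" by blast
  moreover have "dist (t, R t) (x, y) < e"
    using t M by (simp add: dist_Pair_Pair dist_real_def)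
  ultimately show "\<exists>q\<in>{(x, R x) | x. x \<in> {0..1}}. dist q (x, y) < e" by blast
qed

theorem proposition4p1:
  shows "(closure {(x, R x) | x. x \<in> {0..1}}
           = {(x, R x) | x. x \<in> {0..1}} \<union> (\<Union>x\<in>dyadics - {1}. {x} \<times> Iint x))
    \<and> (\<forall>x\<in>dyadics - {0, 1}.
           (\<exists>a b. Liminf (at_right x) (\<lambda>t. ereal (R t)) = ereal a
                 \<and> Limsup (at_right x) (\<lambda>t. ereal (R t)) = ereal b
                 \<and> Iint x = {a..b})
           \<and> R x \<notin> Iint x)"
proof (intro conjI ballI)
  show "closure {(x, R x) | x. x \<in> {0..1}}
           = {(x, R x) | x. x \<in> {0..1}} \<union> (\<Union>x\<in>dyadics - {1}. {x} \<times> Iint x)"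
  proof
    show "closure {(x, R x) | x. x \<in> {0..1}}
           \<subseteq> {(x, R x) | x. x \<in> {0..1}} \<union> (\<Union>x\<in>dyadics - {1}. {x} \<times> Iint x)"
    proof (rule subsetI)
      fix p assume p: "p \<in> closure {(x, R x) | x. x \<in> {0..1}}"
      have pp: "p = (fst p, snd p)" by simp
      have "(fst p, snd p) \<in> closure {(x, R x) | x. x \<in> {0..1}}" using p by simp
      then have "(fst p, snd p) \<in> {(x, R x) | x. x \<in> {0..1}} \<union> (\<Union>x\<in>dyadics - {1}. {x} \<times> Iint x)"
        by (rule closure_sub)
      then show "p \<in> {(x, R x) | x. x \<in> {0..1}} \<union> (\<Union>x\<in>dyadics - {1}. {x} \<times> Iint x)"
        by simp
    qed
    show "{(x, R x) | x. x \<in> {0..1}} \<union> (\<Union>x\<in>dyadics - {1}. {x} \<times> Iint x)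
           \<subseteq> closure {(x, R x) | x. x \<in> {0..1}}"
    proof (rule subsetI)
      fix p assume p: "p \<in> {(x, R x) | x. x \<in> {0..1}} \<union> (\<Union>x\<in>dyadics - {1}. {x} \<times> Iint x)"
      show "p \<in> closure {(x, R x) | x. x \<in> {0..1}}"
      proof (cases "p \<in> {(x, R x) | x. x \<in> {0..1}}")
        case True then show ?thesis by (rule subsetD[OF closure_subset])
      next
        case False
        then have "p \<in> (\<Union>x\<in>dyadics - {1}. {x} \<times> Iint x)" using p by (simp only: Un_iff) simp
        then obtain x where x: "x \<in> dyadics - {1}" "p \<in> {x} \<times> Iint x" by (rule UN_E)
        then have f: "fst p = x" "snd p \<in> Iint x" by (auto simp: mem_Times_iff)
        have "(x, snd p) \<in> closure {(x, R x) | x. x \<in> {0..1}}" by (rule closure_sup[OF x(1) f(2)])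
        moreover have "p = (x, snd p)" using f(1) by (metis prod.collapse)
        ultimately show ?thesis by simp
      qed
    qed
  qed
next
  fix x assume "x \<in> dyadics - {0, 1}"
  then show "\<exists>a b. Liminf (at_right x) (\<lambda>t. ereal (R t)) = ereal a
                 \<and> Limsup (at_right x) (\<lambda>t. ereal (R t)) = ereal b
                 \<and> Iint x = {a..b}" by (rule liminf_limsup)
next
  fix x assume "x \<in> dyadics - {0, 1}"
  then show "R x \<notin> Iint x" by (rule R_notin)
qed


end
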